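(* Let $n=p_1^{r_1}p_2^{r_2}\cdots p_k^{r_k}\ge 2$, where $p_1,\ldots,p_k$ are distinct primes and $r_i\ge1$. Then $\theta_t(G(n))=k$, and there is exactly one total clique covering of $G(n)$ consisting of precisely $k$ cliques.
   Context: For an integer $n\ge2$, $G(n)$ is the simple undirected graph whose vertex set is the set of divisors of $n$ greater than $1$, two distinct vertices $a,b$ being adjacent iff $\gcd(a,b)>1$. A clique is a set of pairwise adjacent vertices; a set $S$ of cliques of a graph is a total clique covering if every vertex lies in some member of $S$ and every edge has both endpoints in some member of $S$. $\theta_t(G)$ denotes the minimum size of a total clique covering of $G$. *)

theory Defs
  imports "HOL-Computational_Algebra.Primes"
begin

text \<open>A simple graph is given by a vertex set V and a (symmetric, irreflexive)
  edge relation E.\<close>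

definition is_clique :: "'a set \<Rightarrow> ('a \<Rightarrow> 'a \<Rightarrow> bool) \<Rightarrow> 'a set \<Rightarrow> bool" where
  "is_clique V E C \<longleftrightarrow> C \<subseteq> V \<and> (\<forall>a\<in>C. \<forall>b\<in>C. a \<noteq> b \<longrightarrow> E a b)"

definition total_clique_covering ::
    "'a set \<Rightarrow> ('a \<Rightarrow> 'a \<Rightarrow> bool) \<Rightarrow> 'a set set \<Rightarrow> bool" where
  "total_clique_covering V E S \<longleftrightarrow>
     (\<forall>C\<in>S. is_clique V E C) \<and>
     (\<forall>v\<in>V. \<exists>C\<in>S. v \<in> C) \<and>
     (\<forall>a\<in>V. \<forall>b\<in>V. E a b \<longrightarrow> (\<exists>C\<in>S. a \<in> C \<and> b \<in> C))"

definition theta_t :: "'a set \<Rightarrow> ('a \<Rightarrow> 'a \<Rightarrow> bool) \<Rightarrow> nat" where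
  "theta_t V E = (LEAST m. \<exists>S. finite S \<and> total_clique_covering V E S \<and> card S = m)"

definition Gverts :: "nat \<Rightarrow> nat set" where
  "Gverts n = {d. d dvd n \<and> 1 < d}"

definition Gadj :: "nat \<Rightarrow> nat \<Rightarrow> bool" where
  "Gadj a b \<longleftrightarrow> a \<noteq> b \<and> 1 < gcd a b"

end

theory Submission
  imports Defs
begin

lemma prime_gadj_eq:
  assumes "prime p" "prime q" "Gadj p q" shows False
proof -
  have "p \<noteq> q" "1 < gcd p q" using assms(3) by (auto simp: Gadj_def)
  moreover have "coprime p q" using assms(1,2) \<open>p \<noteq> q\<close> by (simp add: primes_coprime)
  ultimately show False by simp
qed

lemma pf_in_V: "n \<ge> 2 \<Longrightarrow> p \<in> prime_factors n \<Longrightarrow> p \<in> Gverts n"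
  using prime_gt_1_nat by (auto simp: Gverts_def in_prime_factors_iff)

lemma cover_K:
  assumes "n \<ge> 2"
  shows "total_clique_covering (Gverts n) Gadj ((\<lambda>p. {d\<in>Gverts n. p dvd d}) ` prime_factors n)"
  unfolding total_clique_covering_def
proof (intro conjI ballI impI)
  fix C assume "C \<in> (\<lambda>p. {d\<in>Gverts n. p dvd d}) ` prime_factors n"
  then obtain p where p: "p \<in> prime_factors n" "C = {d\<in>Gverts n. p dvd d}" by blast
  have "prime p" using p by auto
  show "is_clique (Gverts n) Gadj C" unfolding is_clique_def
  proof (intro conjI ballI impI)
    fix a b assume "a \<in> C" "b \<in> C" "a \<noteq> b"
    then have "p dvd gcd a b" using p by auto
    moreover have "gcd a b \<noteq> 0" using \<open>a\<in>C\<close> p by (auto simp: Gverts_def)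
    ultimately have "p \<le> gcd a b" by (simp add: dvd_imp_le)
    then show "Gadj a b" unfolding Gadj_def using \<open>a\<noteq>b\<close> prime_gt_1_nat[OF \<open>prime p\<close>] by simp
  qed (use p in auto)
next
  fix v assume v: "v \<in> Gverts n"
  then have "v \<noteq> 1" "v dvd n" by (auto simp: Gverts_def)
  then obtain p where "prime p" "p dvd v" using prime_factor_nat by blast
  moreover have "n \<noteq> 0" using assms by simp
  moreover have "p dvd n" using \<open>p dvd v\<close> \<open>v dvd n\<close> by (rule dvd_trans)
  ultimately have "p \<in> prime_factors n" by (simp add: in_prime_factors_iff)
  then have "{d\<in>Gverts n. p dvd d} \<in> (\<lambda>p. {d\<in>Gverts n. p dvd d}) ` prime_factors n"
    by (rule imageI)
  moreover have "v \<in> {d\<in>Gverts n. p dvd d}" using v \<open>p dvd v\<close> by simp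
  ultimately show "\<exists>C\<in>(\<lambda>p. {d\<in>Gverts n. p dvd d}) ` prime_factors n. v \<in> C"
    by (rule bexI[rotated])
next
  fix a b assume ab: "a \<in> Gverts n" "b \<in> Gverts n" "Gadj a b"
  then have "gcd a b \<noteq> 1" by (auto simp: Gadj_def)
  then obtain p where "prime p" "p dvd gcd a b" using prime_factor_nat by blast
  moreover have "n \<noteq> 0" using assms by simp
  moreover have "a dvd n" using ab by (auto simp: Gverts_def)
  moreover have "p dvd n" using \<open>p dvd gcd a b\<close> \<open>a dvd n\<close> by (meson dvd_trans gcd_dvd1)
  ultimately have "p \<in> prime_factors n" by (simp add: in_prime_factors_iff)
  moreover have "p dvd a" "p dvd b" using \<open>p dvd gcd a b\<close> by auto
  ultimately have "{d\<in>Gverts n. p dvd d} \<in> (\<lambda>p. {d\<in>Gverts n. p dvd d}) ` prime_factors n"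
    "a \<in> {d\<in>Gverts n. p dvd d} \<and> b \<in> {d\<in>Gverts n. p dvd d}" using ab by auto
  then show "\<exists>C\<in>(\<lambda>p. {d\<in>Gverts n. p dvd d}) ` prime_factors n. a \<in> C \<and> b \<in> C"
    by (rule bexI[rotated])
qed

lemma card_K:
  assumes "n \<ge> 2"
  shows "card ((\<lambda>p. {d\<in>Gverts n. p dvd d}) ` prime_factors n) = card (prime_factors n)"
proof (rule card_image)
  show "inj_on (\<lambda>p. {d\<in>Gverts n. p dvd d}) (prime_factors n)"
  proof (rule inj_onI)
    fix p q assume pq: "p \<in> prime_factors n" "q \<in> prime_factors n"
      "{d\<in>Gverts n. p dvd d} = {d\<in>Gverts n. q dvd d}"
    have "p \<in> {d\<in>Gverts n. p dvd d}" using pf_in_V[OF assms pq(1)] by simp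
    then have "p \<in> {d\<in>Gverts n. q dvd d}" using pq(3) by simp
    then have "q dvd p" by simp
    moreover have "prime p" "prime q" using pq(1,2) by auto
    ultimately show "p = q" using primes_dvd_imp_eq by metis
  qed
qed

lemma pick:
  assumes "total_clique_covering (Gverts n) Gadj S" "n \<ge> 2" "p \<in> prime_factors n"
  shows "(SOME C. C \<in> S \<and> p \<in> C) \<in> S \<and> p \<in> (SOME C. C \<in> S \<and> p \<in> C)"
proof -
  have "\<exists>C. C \<in> S \<and> p \<in> C" using assms pf_in_V unfolding total_clique_covering_def by blast
  then show ?thesis by (rule someI_ex)
qed

lemma two_primes_same:
  assumes "total_clique_covering (Gverts n) Gadj S" "C \<in> S" "p \<in> C" "q \<in> C"
    "prime p" "prime q" shows "p = q"
proof (rule ccontr)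
  assume "p \<noteq> q"
  have "is_clique (Gverts n) Gadj C" using assms unfolding total_clique_covering_def by blast
  then have "Gadj p q" using assms \<open>p\<noteq>q\<close> unfolding is_clique_def by blast
  then show False using prime_gadj_eq assms by blast
qed

lemma lower:
  assumes "total_clique_covering (Gverts n) Gadj S" "n \<ge> 2" "finite S"
  shows "card (prime_factors n) \<le> card S \<and>
    (card S = card (prime_factors n) \<longrightarrow> S = (\<lambda>p. {d\<in>Gverts n. p dvd d}) ` prime_factors n)"
proof -
  define f where "f p = (SOME C. C \<in> S \<and> p \<in> C)" for p
  have f: "\<And>p. p \<in> prime_factors n \<Longrightarrow> f p \<in> S \<and> p \<in> f p"
    unfolding f_def using pick[OF assms(1,2)] by blast
  have inj: "inj_on f (prime_factors n)"
  proof (rule inj_onI)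
    fix p q assume pq: "p \<in> prime_factors n" "q \<in> prime_factors n" "f p = f q"
    have "f p \<in> S" "p \<in> f p" "q \<in> f p" using f[OF pq(1)] f[OF pq(2)] pq(3) by auto
    moreover have "prime p" "prime q" using pq by auto
    ultimately show "p = q" using two_primes_same[OF assms(1)] by blast
  qed
  have sub: "f ` prime_factors n \<subseteq> S" using f by blast
  have le: "card (prime_factors n) \<le> card S"
    using card_inj_on_le[OF inj sub assms(3)] .
  moreover have "S = (\<lambda>p. {d\<in>Gverts n. p dvd d}) ` prime_factors n"
    if eq: "card S = card (prime_factors n)"
  proof -
    have "card (f ` prime_factors n) = card S" using card_image[OF inj] eq by simp
    then have S: "S = f ` prime_factors n" using card_subset_eq[OF assms(3) sub] by simp
    have uniq: "C = f p" if h: "C \<in> S" "p \<in> C" "p \<in> prime_factors n" for C p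
    proof -
      from h(1) S obtain q where q: "q \<in> prime_factors n" "C = f q" by blast
      have "q \<in> C" "prime q" "prime p" using f[OF q(1)] q h(3) by auto
      then have "p = q" using two_primes_same[OF assms(1) h(1) h(2)] by blast
      then show ?thesis using q by simp
    qed
    have "f p = {d\<in>Gverts n. p dvd d}" if p: "p \<in> prime_factors n" for p
    proof
      have pr: "prime p" using p by auto
      have cl: "is_clique (Gverts n) Gadj (f p)" using f[OF p] assms(1)
        unfolding total_clique_covering_def by blast
      show "f p \<subseteq> {d\<in>Gverts n. p dvd d}"
      proof
        fix d assume d: "d \<in> f p"
        then have dV: "d \<in> Gverts n" using cl unfolding is_clique_def by blast
        show "d \<in> {d\<in>Gverts n. p dvd d}"
        proof (cases "d = p")
          case False
          have "p \<in> f p" using f[OF p] by simp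
          then have "Gadj p d" using cl d False unfolding is_clique_def by metis
          then have "gcd p d \<noteq> 1" by (auto simp: Gadj_def)
          then have "\<not> coprime p d" by (simp add: coprime_iff_gcd_eq_1)
          then have "p dvd d" using pr prime_imp_coprime by blast
          then show ?thesis using dV by simp
        qed (use dV in simp)
      qed
      show "{d\<in>Gverts n. p dvd d} \<subseteq> f p"
      proof
        fix d assume d: "d \<in> {d\<in>Gverts n. p dvd d}"
        show "d \<in> f p"
        proof (cases "d = p")
          case True then show ?thesis using f[OF p] by simp
        next
          case False
          have "gcd p d = p" using d by (simp add: gcd_nat.absorb1)
          then have "Gadj p d" using False prime_gt_1_nat[OF pr] by (simp add: Gadj_def)
          moreover have "p \<in> Gverts n" "d \<in> Gverts n" using d pf_in_V[OF assms(2) p] by auto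
          ultimately obtain C where "C \<in> S" "p \<in> C" "d \<in> C"
            using assms(1) unfolding total_clique_covering_def by meson
          then show ?thesis using uniq[OF _ _ p] by blast
        qed
      qed
    qed
    then have "f ` prime_factors n = (\<lambda>p. {d\<in>Gverts n. p dvd d}) ` prime_factors n"
      by (rule image_cong[OF refl])
    then show ?thesis using S by simp
  qed
  ultimately show ?thesis by blast
qed

theorem theorem4:
  fixes n :: nat
  assumes "n \<ge> 2"
  shows "theta_t (Gverts n) Gadj = card (prime_factors n)
         \<and> (\<exists>!S. total_clique_covering (Gverts n) Gadj S \<and> card S = card (prime_factors n))"
proof -
  let ?K = "(\<lambda>p. {d\<in>Gverts n. p dvd d}) ` prime_factors n"
  have pos: "card (prime_factors n) > 0"
  proof -
    obtain p where "prime p" "p dvd n" using prime_factor_nat[of n] assms by auto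
    then have "p \<in> prime_factors n" using assms by (auto simp: in_prime_factors_iff)
    then show ?thesis by (auto simp: card_gt_0_iff)
  qed
  have Kfin: "finite ?K" by simp
  have th: "theta_t (Gverts n) Gadj = card (prime_factors n)"
    unfolding theta_t_def
  proof (rule Least_equality)
    show "\<exists>S. finite S \<and> total_clique_covering (Gverts n) Gadj S \<and> card S = card (prime_factors n)"
      using cover_K[OF assms] card_K[OF assms] Kfin by blast
  next
    fix m assume "\<exists>S. finite S \<and> total_clique_covering (Gverts n) Gadj S \<and> card S = m"
    then show "card (prime_factors n) \<le> m" using lower[OF _ assms] by blast
  qed
  have "\<exists>!S. total_clique_covering (Gverts n) Gadj S \<and> card S = card (prime_factors n)"
  proof (rule ex1I[of _ ?K])
    show "total_clique_covering (Gverts n) Gadj ?K \<and> card ?K = card (prime_factors n)"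
      using cover_K[OF assms] card_K[OF assms] by blast
  next
    fix S assume S: "total_clique_covering (Gverts n) Gadj S \<and> card S = card (prime_factors n)"
    then have "finite S" using pos card_gt_0_iff by metis
    then show "S = ?K" using lower[OF _ assms] S by blast
  qed
  with th show ?thesis by blast
qed

end
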